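(* Let $A \in \mathrm{Sp}(n,1)$ be a hyperbolic element written as $A=i_1i_2$ with $i_1,i_2\in\mathrm{Sp}(n,1)$ and $i_1^2=i_2^2=-I$. Then each of $i_1$ and $i_2$ maps the set of the two boundary fixed points of $A$ to itself.
   Context: $\mathbb{H}^{n+1}$ is a right $\mathbb{H}$-vector space with Hermitian form $\langle \mathbf z,\mathbf w\rangle = \bar w_{n+1} z_1 + \sum_{i=2}^{n} \bar w_i z_i + \bar w_1 z_{n+1}$; $\mathrm{Sp}(n,1)$ is the group of quaternionic matrices preserving it, acting on the boundary of quaternionic hyperbolic space (the set of right quaternionic lines of nonzero null vectors). An element is hyperbolic if it has exactly two fixed points on this boundary. *)

theory Defs
  imports Complex_Main
begin

datatype quat = Quat (qr: real) (qi: real) (qj: real) (qk: real)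

lemma quat_eqI: "qr a = qr b \<Longrightarrow> qi a = qi b \<Longrightarrow> qj a = qj b \<Longrightarrow> qk a = qk b \<Longrightarrow> a = b"
  by (cases a; cases b) simp

instantiation quat :: ring_1
begin
definition "0 = Quat 0 0 0 0"
definition "1 = Quat 1 0 0 0"
definition "a + b = Quat (qr a + qr b) (qi a + qi b) (qj a + qj b) (qk a + qk b)"
definition "- a = Quat (- qr a) (- qi a) (- qj a) (- qk a)"
definition "a - b = Quat (qr a - qr b) (qi a - qi b) (qj a - qj b) (qk a - qk b)"
definition "a * b = Quat
   (qr a * qr b - qi a * qi b - qj a * qj b - qk a * qk b)
   (qr a * qi b + qi a * qr b + qj a * qk b - qk a * qj b)
   (qr a * qj b - qi a * qk b + qj a * qr b + qk a * qi b)
   (qr a * qk b + qi a * qj b - qj a * qi b + qk a * qr b)"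
instance
  by standard (auto intro!: quat_eqI simp: zero_quat_def one_quat_def plus_quat_def
      uminus_quat_def minus_quat_def times_quat_def algebra_simps)
end

definition qcnj :: "quat \<Rightarrow> quat" where
  "qcnj a = Quat (qr a) (- qi a) (- qj a) (- qk a)"

definition vecs :: "nat \<Rightarrow> (nat \<Rightarrow> quat) set" where
  "vecs n = {z. \<forall>i. (i < 1 \<or> i > n + 1) \<longrightarrow> z i = 0}"

definition herm :: "nat \<Rightarrow> (nat \<Rightarrow> quat) \<Rightarrow> (nat \<Rightarrow> quat) \<Rightarrow> quat" where
  "herm n z w = qcnj (w (n + 1)) * z 1 + (\<Sum>i = 2..n. qcnj (w i) * z i) + qcnj (w 1) * z (n + 1)"

definition rsmult :: "(nat \<Rightarrow> quat) \<Rightarrow> quat \<Rightarrow> (nat \<Rightarrow> quat)" where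
  "rsmult z c = (\<lambda>i. z i * c)"

text \<open>Matrices: functions nat => nat => quat, only entries in {1..n+1}^2 matter.\<close>
definition mvec :: "nat \<Rightarrow> (nat \<Rightarrow> nat \<Rightarrow> quat) \<Rightarrow> (nat \<Rightarrow> quat) \<Rightarrow> (nat \<Rightarrow> quat)" where
  "mvec n A z = (\<lambda>i. if 1 \<le> i \<and> i \<le> n + 1 then (\<Sum>j = 1..n + 1. A i j * z j) else 0)"

definition mmul :: "nat \<Rightarrow> (nat \<Rightarrow> nat \<Rightarrow> quat) \<Rightarrow> (nat \<Rightarrow> nat \<Rightarrow> quat) \<Rightarrow> (nat \<Rightarrow> nat \<Rightarrow> quat)" where
  "mmul n A B = (\<lambda>i j. \<Sum>k = 1..n + 1. A i k * B k j)"

definition mat_eq :: "nat \<Rightarrow> (nat \<Rightarrow> nat \<Rightarrow> quat) \<Rightarrow> (nat \<Rightarrow> nat \<Rightarrow> quat) \<Rightarrow> bool" where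
  "mat_eq n A B \<longleftrightarrow> (\<forall>i \<in> {1..n + 1}. \<forall>j \<in> {1..n + 1}. A i j = B i j)"

definition neg_id :: "nat \<Rightarrow> nat \<Rightarrow> quat" where
  "neg_id = (\<lambda>i j. if i = j then - 1 else 0)"

definition Sp :: "nat \<Rightarrow> (nat \<Rightarrow> nat \<Rightarrow> quat) \<Rightarrow> bool" where
  "Sp n A \<longleftrightarrow> (\<forall>z \<in> vecs n. \<forall>w \<in> vecs n. herm n (mvec n A z) (mvec n A w) = herm n z w)"

definition qline :: "(nat \<Rightarrow> quat) \<Rightarrow> (nat \<Rightarrow> quat) set" where
  "qline z = {rsmult z c | c. c \<noteq> 0}"

definition boundary :: "nat \<Rightarrow> (nat \<Rightarrow> quat) set set" where
  "boundary n = {qline z | z. z \<in> vecs n \<and> z \<noteq> (\<lambda>_. 0) \<and> herm n z z = 0}"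

definition act :: "nat \<Rightarrow> (nat \<Rightarrow> nat \<Rightarrow> quat) \<Rightarrow> (nat \<Rightarrow> quat) set \<Rightarrow> (nat \<Rightarrow> quat) set" where
  "act n A L = mvec n A ` L"

definition bfix :: "nat \<Rightarrow> (nat \<Rightarrow> nat \<Rightarrow> quat) \<Rightarrow> (nat \<Rightarrow> quat) set set" where
  "bfix n A = {L \<in> boundary n. act n A L = L}"

definition hyperbolic :: "nat \<Rightarrow> (nat \<Rightarrow> nat \<Rightarrow> quat) \<Rightarrow> bool" where
  "hyperbolic n A \<longleftrightarrow> Sp n A \<and> card (bfix n A) = 2"

end

theory Submission
  imports Defs
begin

declare sum.cl_ivl_Suc[simp del]

lemma mvec_mvec: "mvec n B (mvec n C z) = mvec n (mmul n B C) z"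
proof
  fix i
  have "(\<Sum>j = 1..n + 1. B i j * (if 1 \<le> j \<and> j \<le> n + 1 then \<Sum>k = 1..n + 1. C j k * z k else 0))
      = (\<Sum>j = 1..n + 1. \<Sum>k = 1..n + 1. B i j * (C j k * z k))"
    by (rule sum.cong[OF refl], subst if_P, simp, rule sum_distrib_left)
  also have "\<dots> = (\<Sum>k = 1..n + 1. \<Sum>j = 1..n + 1. B i j * (C j k * z k))"
    by (rule sum.swap)
  also have "\<dots> = (\<Sum>k = 1..n + 1. (\<Sum>j = 1..n + 1. B i j * C j k) * z k)"
    by (simp add: sum_distrib_right mult.assoc)
  finally show "mvec n B (mvec n C z) i = mvec n (mmul n B C) z i"
    by (simp add: mvec_def mmul_def)
qed

lemma mvec_cong: "mat_eq n B C \<Longrightarrow> mvec n B z = mvec n C z"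
  unfolding mvec_def mat_eq_def
  by (intro ext) (auto intro!: sum.cong)

lemma act_act: "act n B (act n C L) = act n (mmul n B C) L"
  by (simp add: act_def image_image mvec_mvec)

lemma act_cong: "mat_eq n B C \<Longrightarrow> act n B L = act n C L"
  by (simp add: act_def mvec_cong)

lemma mvec_rsmult: "mvec n M (rsmult z c) = rsmult (mvec n M z) c"
  by (auto simp: mvec_def rsmult_def sum_distrib_right mult.assoc fun_eq_iff)

lemma act_qline: "act n M (qline z) = qline (mvec n M z)"
proof
  show "act n M (qline z) \<subseteq> qline (mvec n M z)"
    unfolding act_def qline_def by (auto simp: mvec_rsmult)
  show "qline (mvec n M z) \<subseteq> act n M (qline z)"
  proof
    fix x assume "x \<in> qline (mvec n M z)"
    then obtain c where "c \<noteq> 0" "x = rsmult (mvec n M z) c" by (auto simp: qline_def)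
    then have "x = mvec n M (rsmult z c)" "rsmult z c \<in> qline z"
      by (auto simp: mvec_rsmult qline_def)
    then show "x \<in> act n M (qline z)" by (simp add: act_def)
  qed
qed

lemma mvec_negid: "z \<in> vecs n \<Longrightarrow> mvec n neg_id z = rsmult z (-1)"
proof
  fix i assume z: "z \<in> vecs n"
  show "mvec n neg_id z i = rsmult z (-1) i"
  proof (cases "1 \<le> i \<and> i \<le> n + 1")
    case True
    have "(\<Sum>j = 1..n + 1. neg_id i j * z j) = (\<Sum>j = 1..n + 1. if j = i then - z j else 0)"
      by (intro sum.cong) (auto simp: neg_id_def)
    also have "\<dots> = - z i" using True by (simp add: sum.delta')
    finally show ?thesis using True by (simp add: mvec_def rsmult_def)
  next
    case False
    then have "i < 1 \<or> i > n + 1" by linarith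
    then have "z i = 0" using z unfolding vecs_def by blast
    have "mvec n neg_id z i = 0" using False unfolding mvec_def by (simp only: if_False)
    then show ?thesis using \<open>z i = 0\<close> by (simp add: rsmult_def)
  qed
qed

lemma qline_neg: "qline (rsmult z (-1)) = qline z"
proof -
  have "rsmult (rsmult z (-1)) c = rsmult z (- c)" for c
    by (simp add: rsmult_def)
  then show ?thesis unfolding qline_def
    by (auto, metis minus_minus neg_equal_0_iff_equal)
qed

lemma act_negid: "L \<in> boundary n \<Longrightarrow> mat_eq n M neg_id \<Longrightarrow> act n M L = L"
  by (auto simp: boundary_def act_cong[of n M neg_id] act_qline mvec_negid qline_neg)

lemma mvec_vecs: "mvec n M z \<in> vecs n"
  by (simp add: mvec_def vecs_def)

lemma mvec_zero: "mvec n M (\<lambda>_. 0) = (\<lambda>_. 0)"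
  by (simp add: mvec_def fun_eq_iff)

lemma act_boundary:
  assumes "Sp n M" "mat_eq n (mmul n M M) neg_id" "L \<in> boundary n"
  shows "act n M L \<in> boundary n"
proof -
  obtain z where z: "L = qline z" "z \<in> vecs n" "z \<noteq> (\<lambda>_. 0)" "herm n z z = 0"
    using assms(3) by (auto simp: boundary_def)
  have nz: "mvec n M z \<noteq> (\<lambda>_. 0)"
  proof
    assume h: "mvec n M z = (\<lambda>_. 0)"
    have "mvec n M (mvec n M z) = rsmult z (-1)"
      using mvec_mvec mvec_cong[OF assms(2)] mvec_negid[OF z(2)] by metis
    then have "rsmult z (-1) = (\<lambda>_. 0)" using h mvec_zero by metis
    then have "z = (\<lambda>_. 0)" by (auto simp: rsmult_def fun_eq_iff)
    then show False using z(3) by simp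
  qed
  have "herm n (mvec n M z) (mvec n M z) = 0"
    using assms(1) z(2,4) by (simp add: Sp_def)
  then show ?thesis using nz z(1) mvec_vecs
    by (auto simp: boundary_def act_qline)
qed

theorem lemma2p3:
  fixes n :: nat and A i1 i2 :: "nat \<Rightarrow> nat \<Rightarrow> quat"
  assumes "n \<ge> 1"
    and "hyperbolic n A"
    and "Sp n i1" and "Sp n i2"
    and "mat_eq n A (mmul n i1 i2)"
    and "mat_eq n (mmul n i1 i1) neg_id"
    and "mat_eq n (mmul n i2 i2) neg_id"
  shows "act n i1 ` bfix n A = bfix n A \<and> act n i2 ` bfix n A = bfix n A"
proof -
  have AA: "act n A L = act n i1 (act n i2 L)" for L
    by (simp only: act_cong[OF assms(5)] act_act)
  have inv1: "act n i1 (act n i1 L) = L" if "L \<in> boundary n" for L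
    by (simp only: act_act act_negid[OF that assms(6)])
  have inv2: "act n i2 (act n i2 L) = L" if "L \<in> boundary n" for L
    by (simp only: act_act act_negid[OF that assms(7)])
  have b1: "act n i1 L \<in> boundary n" if "L \<in> boundary n" for L
    using act_boundary[OF assms(3,6) that] .
  have b2: "act n i2 L \<in> boundary n" if "L \<in> boundary n" for L
    using act_boundary[OF assms(4,7) that] .
  have eq12: "act n i1 L = act n i2 L" if "L \<in> bfix n A" for L
  proof -
    have L: "L \<in> boundary n" "act n A L = L" using that by (auto simp: bfix_def)
    have "act n i1 L = act n i1 (act n A L)" using L(2) by simp
    also have "\<dots> = act n i1 (act n i1 (act n i2 L))" by (simp only: AA)
    also have "\<dots> = act n i2 L" by (rule inv1[OF b2[OF L(1)]])
    finally show ?thesis .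
  qed
  have f1: "act n i1 L \<in> bfix n A" if "L \<in> bfix n A" for L
  proof -
    have L: "L \<in> boundary n" "act n A L = L" using that by (auto simp: bfix_def)
    have "act n A (act n i1 L) = act n i1 (act n i2 (act n i1 L))" by (rule AA)
    also have "\<dots> = act n i1 (act n i2 (act n i2 L))" by (simp only: eq12[OF that])
    also have "\<dots> = act n i1 L" by (simp only: inv2[OF L(1)])
    finally show ?thesis using b1[OF L(1)] by (simp add: bfix_def)
  qed
  have f2: "act n i2 L \<in> bfix n A" if "L \<in> bfix n A" for L
    using f1[OF that] eq12[OF that] by simp
  have s1: "act n i1 ` bfix n A = bfix n A"
  proof
    show "act n i1 ` bfix n A \<subseteq> bfix n A" using f1 by blast
    show "bfix n A \<subseteq> act n i1 ` bfix n A"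
    proof
      fix L assume h: "L \<in> bfix n A"
      then have "L \<in> boundary n" by (simp add: bfix_def)
      then have "L = act n i1 (act n i1 L)" by (simp add: inv1)
      then show "L \<in> act n i1 ` bfix n A" using f1[OF h] by (rule image_eqI)
    qed
  qed
  have s2: "act n i2 ` bfix n A = bfix n A"
  proof
    show "act n i2 ` bfix n A \<subseteq> bfix n A" using f2 by blast
    show "bfix n A \<subseteq> act n i2 ` bfix n A"
    proof
      fix L assume h: "L \<in> bfix n A"
      then have "L \<in> boundary n" by (simp add: bfix_def)
      then have "L = act n i2 (act n i2 L)" by (simp add: inv2)
      then show "L \<in> act n i2 ` bfix n A" using f2[OF h] by (rule image_eqI)
    qed
  qed
  show ?thesis using s1 s2 by simp
qed

end
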